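(* Let $D$ be a division algebra and let $S$ be a ring extension of $D$ which is automorphically normalizable over $D$. If $S$ is a division algebra, then $S$ is finitely generated as a left $D$-module.
   Context: All rings are associative with unity. For a ring $S\supseteq D$, $a\in S$ is automorphic over $D$ with respect to $\tau\in\mathrm{Aut}(D)$ if $ab=\tau(b)a$ for all $b\in D$. Commuting $a_1,\ldots,a_m\in S$ are (left) algebraically independent over $D$ if the monomials $a_1^{i_1}\cdots a_m^{i_m}$ are left linearly independent over $D$. $S$ is automorphically normalizable over $D$ if there exist $m\ge0$ and commuting $a_1,\ldots,a_m\in S$, automorphic over $D$ with respect to pairwise commuting automorphisms $\tau_1,\ldots,\tau_m$ of $D$, left algebraically independent over $D$, such that $S$ is finitely generated as a left module over the subring $D[a_1,\ldots,a_m]$ generated by $D\cup\{a_1,\ldots,a_m\}$. *)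

theory Defs
  imports Main
begin

text \<open>All structures live inside one ambient ring, the type 'a; the ring S is UNIV.\<close>

definition subdivring :: "'a::division_ring set \<Rightarrow> bool" where
  "subdivring D \<longleftrightarrow> 0 \<in> D \<and> 1 \<in> D \<and>
     (\<forall>x\<in>D. \<forall>y\<in>D. x + y \<in> D \<and> x * y \<in> D) \<and>
     (\<forall>x\<in>D. - x \<in> D) \<and> (\<forall>x\<in>D. x \<noteq> 0 \<longrightarrow> inverse x \<in> D)"

definition ring_aut_on :: "'a::ring_1 set \<Rightarrow> ('a \<Rightarrow> 'a) \<Rightarrow> bool" where
  "ring_aut_on D \<tau> \<longleftrightarrow> bij_betw \<tau> D D \<and> \<tau> 1 = 1 \<and>
     (\<forall>x\<in>D. \<forall>y\<in>D. \<tau> (x + y) = \<tau> x + \<tau> y \<and> \<tau> (x * y) = \<tau> x * \<tau> y)"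

definition automorphic :: "'a::ring_1 set \<Rightarrow> ('a \<Rightarrow> 'a) \<Rightarrow> 'a \<Rightarrow> bool" where
  "automorphic D \<tau> a \<longleftrightarrow> (\<forall>b\<in>D. a * b = \<tau> b * a)"

definition expvecs :: "nat \<Rightarrow> (nat \<Rightarrow> nat) set" where
  "expvecs m = {e. \<forall>k. m \<le> k \<longrightarrow> e k = 0}"

definition monom :: "(nat \<Rightarrow> 'a::ring_1) \<Rightarrow> nat \<Rightarrow> (nat \<Rightarrow> nat) \<Rightarrow> 'a" where
  "monom a m e = foldr (\<lambda>k p. a k ^ e k * p) [0..<m] 1"

definition left_alg_indep :: "'a::ring_1 set \<Rightarrow> (nat \<Rightarrow> 'a) \<Rightarrow> nat \<Rightarrow> bool" where
  "left_alg_indep D a m \<longleftrightarrow>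
     (\<forall>E c. finite E \<and> E \<subseteq> expvecs m \<and> (\<forall>e\<in>E. c e \<in> D) \<and>
            (\<Sum>e\<in>E. c e * monom a m e) = 0 \<longrightarrow> (\<forall>e\<in>E. c e = 0))"

inductive_set gen_subring :: "'a::ring_1 set \<Rightarrow> 'a set" for X where
  gen_base: "x \<in> X \<Longrightarrow> x \<in> gen_subring X"
| gen_zero: "0 \<in> gen_subring X"
| gen_one: "1 \<in> gen_subring X"
| gen_add: "x \<in> gen_subring X \<Longrightarrow> y \<in> gen_subring X \<Longrightarrow> x + y \<in> gen_subring X"
| gen_neg: "x \<in> gen_subring X \<Longrightarrow> - x \<in> gen_subring X"
| gen_mult: "x \<in> gen_subring X \<Longrightarrow> y \<in> gen_subring X \<Longrightarrow> x * y \<in> gen_subring X"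

definition fin_gen_left_module :: "'a::ring_1 set \<Rightarrow> bool" where
  "fin_gen_left_module R \<longleftrightarrow>
     (\<exists>F. finite F \<and> (\<forall>s. \<exists>r. (\<forall>f\<in>F. r f \<in> R) \<and> s = (\<Sum>f\<in>F. r f * f)))"

definition automorphically_normalizable :: "'a::ring_1 set \<Rightarrow> bool" where
  "automorphically_normalizable D \<longleftrightarrow>
     (\<exists>m a \<tau>.
        (\<forall>i<m. \<forall>j<m. a i * a j = a j * a i) \<and>
        (\<forall>i<m. ring_aut_on D (\<tau> i) \<and> automorphic D (\<tau> i) (a i)) \<and>
        (\<forall>i<m. \<forall>j<m. \<forall>x\<in>D. \<tau> i (\<tau> j x) = \<tau> j (\<tau> i x)) \<and>
        left_alg_indep D a m \<and>
        fin_gen_left_module (gen_subring (D \<union> a ` {..<m})))"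

end

theory Submission
  imports Defs Complex_Main
begin


locale AN =
  fixes D :: "'a::division_ring set" and m :: nat and a :: "nat \<Rightarrow> 'a" and \<tau> :: "nat \<Rightarrow> 'a \<Rightarrow> 'a"
  assumes sd: "subdivring D"
  and comm: "\<And>i j. i<m \<Longrightarrow> j<m \<Longrightarrow> a i * a j = a j * a i"
  and aut: "\<And>i. i<m \<Longrightarrow> ring_aut_on D (\<tau> i)"
  and autm: "\<And>i. i<m \<Longrightarrow> automorphic D (\<tau> i) (a i)"
  and indep: "left_alg_indep D a m"
begin

lemma D0: "0 \<in> D" and D1: "1 \<in> D" and Dadd: "x \<in> D \<Longrightarrow> y \<in> D \<Longrightarrow> x + y \<in> D"
  and Dmult: "x \<in> D \<Longrightarrow> y \<in> D \<Longrightarrow> x * y \<in> D" and Dneg: "x \<in> D \<Longrightarrow> - x \<in> D"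
  and Dinv: "x \<in> D \<Longrightarrow> inverse x \<in> D"
  using sd unfolding subdivring_def by (auto simp: inverse_zero)

lemma Ddiff: "x \<in> D \<Longrightarrow> y \<in> D \<Longrightarrow> x - y \<in> D"
  using Dadd Dneg by (metis diff_conv_add_uminus)

lemma tau_D: "i < m \<Longrightarrow> x \<in> D \<Longrightarrow> \<tau> i x \<in> D"
  using aut unfolding ring_aut_on_def bij_betw_def by blast

lemma tau_0: "i < m \<Longrightarrow> \<tau> i 0 = 0"
proof -
  assume i: "i < m"
  have "\<tau> i (0 + 0) = \<tau> i 0 + \<tau> i 0" using aut[OF i] D0 unfolding ring_aut_on_def by blast
  then show ?thesis by simp
qed

lemma tau_nz: "i < m \<Longrightarrow> x \<in> D \<Longrightarrow> x \<noteq> 0 \<Longrightarrow> \<tau> i x \<noteq> 0"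
proof
  assume i: "i < m" and x: "x \<in> D" "x \<noteq> 0" "\<tau> i x = 0"
  have "inj_on (\<tau> i) D" using aut[OF i] unfolding ring_aut_on_def bij_betw_def by blast
  moreover have "\<tau> i x = \<tau> i 0" using x(3) tau_0[OF i] by simp
  ultimately show False using x D0 unfolding inj_on_def by blast
qed

lemma taupow_0: "i < m \<Longrightarrow> (\<tau> i ^^ n) 0 = 0"
  by (induct n) (auto simp: tau_0)

lemma taupow_D: "i < m \<Longrightarrow> x \<in> D \<Longrightarrow> (\<tau> i ^^ n) x \<in> D"
  by (induct n) (auto simp: tau_D)

lemma taupow_nz: "i < m \<Longrightarrow> x \<in> D \<Longrightarrow> x \<noteq> 0 \<Longrightarrow> (\<tau> i ^^ n) x \<noteq> 0"
  by (induct n) (auto simp: tau_nz taupow_D)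

lemma apow_comm: "i < m \<Longrightarrow> x \<in> D \<Longrightarrow> a i ^ n * x = (\<tau> i ^^ n) x * a i ^ n"
proof (induct n)
  case 0 then show ?case by simp
next
  case (Suc n)
  have "a i ^ Suc n * x = a i * (a i ^ n * x)" by (simp add: mult.assoc)
  also have "\<dots> = a i * (\<tau> i ^^ n) x * a i ^ n" using Suc by (simp add: mult.assoc)
  also have "a i * (\<tau> i ^^ n) x = \<tau> i ((\<tau> i ^^ n) x) * a i"
    using autm[OF Suc(2)] taupow_D[OF Suc(2,3)] unfolding automorphic_def by blast
  finally show ?case by (simp add: mult.assoc power_commutes)
qed

definition mon :: "(nat \<Rightarrow> nat) \<Rightarrow> 'a" where "mon e = monom a m e"

definition tpl :: "nat list \<Rightarrow> (nat \<Rightarrow> nat) \<Rightarrow> 'a \<Rightarrow> 'a" where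
  "tpl L e d = foldr (\<lambda>k x. (\<tau> k ^^ e k) x) L d"

definition tp where "tp e d = tpl [0..<m] e d"

lemma tpl_D: "set L \<subseteq> {..<m} \<Longrightarrow> x \<in> D \<Longrightarrow> tpl L e x \<in> D"
  by (induct L) (auto simp: tpl_def taupow_D)

lemma tpl_nz: "set L \<subseteq> {..<m} \<Longrightarrow> x \<in> D \<Longrightarrow> x \<noteq> 0 \<Longrightarrow> tpl L e x \<noteq> 0"
  by (induct L) (auto simp: tpl_def taupow_nz tpl_D[unfolded tpl_def])

lemma tpl_comm: "set L \<subseteq> {..<m} \<Longrightarrow> x \<in> D \<Longrightarrow>
   foldr (\<lambda>k p. a k ^ e k * p) L 1 * x = tpl L e x * foldr (\<lambda>k p. a k ^ e k * p) L 1"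
proof (induct L)
  case Nil then show ?case by (simp add: tpl_def)
next
  case (Cons k L)
  have k: "k < m" and L: "set L \<subseteq> {..<m}" using Cons by auto
  have "foldr (\<lambda>k p. a k ^ e k * p) (k # L) 1 * x = a k ^ e k * (foldr (\<lambda>k p. a k ^ e k * p) L 1 * x)"
    by (simp add: mult.assoc)
  also have "\<dots> = a k ^ e k * tpl L e x * foldr (\<lambda>k p. a k ^ e k * p) L 1"
    using Cons(1)[OF L Cons(3)] by (simp add: mult.assoc)
  also have "a k ^ e k * tpl L e x = (\<tau> k ^^ e k) (tpl L e x) * a k ^ e k"
    using apow_comm[OF k tpl_D[OF L Cons(3)]] .
  finally show ?case by (simp add: tpl_def mult.assoc)
qed

lemma tp_D: "x \<in> D \<Longrightarrow> tp e x \<in> D" unfolding tp_def by (rule tpl_D) auto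
lemma tp_nz: "x \<in> D \<Longrightarrow> x \<noteq> 0 \<Longrightarrow> tp e x \<noteq> 0" unfolding tp_def by (rule tpl_nz) auto
lemma tpl_0: "set L \<subseteq> {..<m} \<Longrightarrow> tpl L e 0 = 0"
  by (induct L) (auto simp: tpl_def taupow_0)
lemma tp_0: "tp e 0 = 0" unfolding tp_def by (rule tpl_0) auto
lemma mon_comm: "x \<in> D \<Longrightarrow> mon e * x = tp e x * mon e"
  unfolding mon_def monom_def tp_def by (rule tpl_comm) auto


abbreviation PL where "PL L e \<equiv> foldr (\<lambda>k p. a k ^ e k * p) L 1"

lemma PL_commute: "set L \<subseteq> {..<m} \<Longrightarrow> (\<And>j. j \<in> set L \<Longrightarrow> x * a j = a j * x) \<Longrightarrow> x * PL L e = PL L e * x"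
proof (induct L)
  case Nil then show ?case by simp
next
  case (Cons k L)
  have "x * a k ^ e k = a k ^ e k * x"
    using power_commuting_commutes[of "a k" x "e k"] Cons(3)[of k] by simp
  then have "x * (a k ^ e k * PL L e) = a k ^ e k * (x * PL L e)"
    by (simp flip: mult.assoc)
  also have "x * PL L e = PL L e * x" using Cons by auto
  finally show ?case by (simp add: mult.assoc)
qed

lemma PL_mult: "set L \<subseteq> {..<m} \<Longrightarrow> PL L d * PL L e = PL L (\<lambda>i. d i + e i)"
proof (induct L)
  case Nil then show ?case by simp
next
  case (Cons k L)
  have k: "k < m" and L: "set L \<subseteq> {..<m}" using Cons by auto
  have c: "a k ^ e k * PL L d = PL L d * a k ^ e k"
  proof (rule PL_commute[OF L])
    fix j assume "j \<in> set L"
    then have "j < m" using L by auto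
    then have "a k * a j = a j * a k" using comm k by blast
    then show "a k ^ e k * a j = a j * a k ^ e k" by (rule power_commuting_commutes)
  qed
  have "PL (k # L) d * PL (k # L) e = a k ^ d k * (PL L d * a k ^ e k) * PL L e"
    by (simp add: mult.assoc)
  also have "\<dots> = a k ^ d k * (a k ^ e k * PL L d) * PL L e" by (simp only: c)
  also have "\<dots> = a k ^ d k * a k ^ e k * (PL L d * PL L e)" by (simp only: mult.assoc)
  also have "\<dots> = PL (k # L) (\<lambda>i. d i + e i)" using Cons(1)[OF L] by (simp add: power_add)
  finally show ?case .
qed

lemma mon_mult: "mon d * mon e = mon (\<lambda>i. d i + e i)"
  unfolding mon_def monom_def by (rule PL_mult) auto

lemma PL_single: "distinct L \<Longrightarrow> PL L (\<lambda>i. if i = j then s else 0) = (if j \<in> set L then a j ^ s else 1)"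
  by (induct L) auto

lemma mon_single: "j < m \<Longrightarrow> mon (\<lambda>i. if i = j then s else 0) = a j ^ s"
  unfolding mon_def monom_def by (subst PL_single) auto

lemma PL_zero: "PL L (\<lambda>i. 0) = 1" by (induct L) auto
lemma mon_zero: "mon (\<lambda>i. 0) = 1"
  unfolding mon_def monom_def by (rule PL_zero)

lemma expvecs_add: "d \<in> expvecs m \<Longrightarrow> e \<in> expvecs m \<Longrightarrow> (\<lambda>i. d i + e i) \<in> expvecs m"
  unfolding expvecs_def by auto
lemma expvecs_diff: "e \<in> expvecs m \<Longrightarrow> (\<lambda>i. e i - d i) \<in> expvecs m"
  unfolding expvecs_def by auto
lemma expvecs_zero: "(\<lambda>i. 0) \<in> expvecs m"
  unfolding expvecs_def by auto
lemma expvecs_single: "j < m \<Longrightarrow> (\<lambda>i. if i = j then s else 0) \<in> expvecs m"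
  unfolding expvecs_def by auto

end

context AN begin

definition valid :: "((nat \<Rightarrow> nat) \<Rightarrow> 'a) \<Rightarrow> bool" where
  "valid p \<longleftrightarrow> (\<forall>e. p e \<in> D) \<and> finite {e. p e \<noteq> 0} \<and> {e. p e \<noteq> 0} \<subseteq> expvecs m"

definition evalp :: "((nat \<Rightarrow> nat) \<Rightarrow> 'a) \<Rightarrow> 'a" where
  "evalp p = (\<Sum>e\<in>{e. p e \<noteq> 0}. p e * mon e)"

lemma evalp_sup: "valid p \<Longrightarrow> finite A \<Longrightarrow> {e. p e \<noteq> 0} \<subseteq> A \<Longrightarrow> evalp p = (\<Sum>e\<in>A. p e * mon e)"
  unfolding evalp_def valid_def by (rule sum.mono_neutral_left) auto

lemma valid_add: "valid p \<Longrightarrow> valid q \<Longrightarrow> valid (\<lambda>e. p e + q e)"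
proof -
  assume p: "valid p" and q: "valid q"
  have "{e. p e + q e \<noteq> 0} \<subseteq> {e. p e \<noteq> 0} \<union> {e. q e \<noteq> 0}" by auto
  then show ?thesis using p q unfolding valid_def by (auto intro: Dadd finite_subset)
qed

lemma evalp_add: "valid p \<Longrightarrow> valid q \<Longrightarrow> evalp (\<lambda>e. p e + q e) = evalp p + evalp q"
proof -
  assume p: "valid p" and q: "valid q"
  let ?A = "{e. p e \<noteq> 0} \<union> {e. q e \<noteq> 0}"
  have fA: "finite ?A" using p q unfolding valid_def by auto
  have "evalp (\<lambda>e. p e + q e) = (\<Sum>e\<in>?A. (p e + q e) * mon e)"
    by (rule evalp_sup[OF valid_add[OF p q] fA]) auto
  also have "\<dots> = (\<Sum>e\<in>?A. p e * mon e) + (\<Sum>e\<in>?A. q e * mon e)"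
    by (simp add: distrib_right sum.distrib)
  also have "\<dots> = evalp p + evalp q"
    using evalp_sup[OF p fA] evalp_sup[OF q fA] by auto
  finally show ?thesis .
qed

lemma valid_neg: "valid p \<Longrightarrow> valid (\<lambda>e. - p e)"
  unfolding valid_def by (auto intro: Dneg)

lemma evalp_neg: "valid p \<Longrightarrow> evalp (\<lambda>e. - p e) = - evalp p"
proof -
  have e: "{e. - p e \<noteq> 0} = {e. p e \<noteq> 0}" by simp
  have "(\<Sum>e\<in>{e. p e \<noteq> 0}. - p e * mon e) = (\<Sum>e\<in>{e. p e \<noteq> 0}. - (p e * mon e))"
    by (rule sum.cong[OF refl]) (rule mult_minus_left)
  also have "\<dots> = - (\<Sum>e\<in>{e. p e \<noteq> 0}. p e * mon e)" by (rule sum_negf)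
  finally show ?thesis unfolding evalp_def e .
qed

lemma valid_diff: "valid p \<Longrightarrow> valid q \<Longrightarrow> valid (\<lambda>e. p e - q e)"
proof -
  assume "valid p" "valid q"
  then have "valid (\<lambda>e. p e + - q e)" using valid_add valid_neg by blast
  then show ?thesis by (simp only: diff_conv_add_uminus)
qed

lemma evalp_diff: "valid p \<Longrightarrow> valid q \<Longrightarrow> evalp (\<lambda>e. p e - q e) = evalp p - evalp q"
proof -
  assume "valid p" "valid q"
  then have "evalp (\<lambda>e. p e + - q e) = evalp p + - evalp q" using evalp_add[OF _ valid_neg, of p q] evalp_neg[of q] by simp
  then show ?thesis by (simp only: diff_conv_add_uminus)
qed

lemma valid_zero: "valid (\<lambda>e. 0)" unfolding valid_def by (auto intro: D0)
lemma evalp_zero: "evalp (\<lambda>e. 0) = 0" unfolding evalp_def by simp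

definition cpoly :: "'a \<Rightarrow> (nat \<Rightarrow> nat) \<Rightarrow> (nat \<Rightarrow> nat) \<Rightarrow> 'a" where "cpoly c e0 = (\<lambda>e. if e = e0 then c else 0)"

lemma valid_cpoly: "c \<in> D \<Longrightarrow> e0 \<in> expvecs m \<Longrightarrow> valid (cpoly c e0)"
proof -
  assume c: "c \<in> D" and e0: "e0 \<in> expvecs m"
  have s: "{e. cpoly c e0 e \<noteq> 0} \<subseteq> {e0}" unfolding cpoly_def by auto
  then have "finite {e. cpoly c e0 e \<noteq> 0}" by (rule finite_subset) simp
  moreover have "\<forall>e. cpoly c e0 e \<in> D" unfolding cpoly_def using c D0 by simp
  ultimately show ?thesis unfolding valid_def using s e0 by blast
qed

lemma evalp_cpoly: "c \<in> D \<Longrightarrow> e0 \<in> expvecs m \<Longrightarrow> evalp (cpoly c e0) = c * mon e0"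
  by (subst evalp_sup[OF valid_cpoly, of _ _ "{e0}"]) (auto simp: cpoly_def)

lemma evalp_unique: assumes p: "valid p" and q: "valid q" and eq: "evalp p = evalp q" shows "p = q"
proof -
  let ?A = "{e. p e \<noteq> 0} \<union> {e. q e \<noteq> 0}"
  have fA: "finite ?A" and sA: "?A \<subseteq> expvecs m" using p q unfolding valid_def by auto
  have "(\<Sum>e\<in>?A. (p e - q e) * mon e) = (\<Sum>e\<in>?A. p e * mon e) - (\<Sum>e\<in>?A. q e * mon e)"
    by (simp add: left_diff_distrib sum_subtractf)
  also have "\<dots> = 0" using evalp_sup[OF p fA] evalp_sup[OF q fA] eq by auto
  finally have z: "(\<Sum>e\<in>?A. (p e - q e) * monom a m e) = 0" unfolding mon_def .
  have dD: "\<forall>e\<in>?A. p e - q e \<in> D" using p q unfolding valid_def by (auto intro: Ddiff)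
  moreover have ind: "\<forall>E c. finite E \<and> E \<subseteq> expvecs m \<and> (\<forall>e\<in>E. c e \<in> D) \<and>
            (\<Sum>e\<in>E. c e * monom a m e) = 0 \<longrightarrow> (\<forall>e\<in>E. c e = 0)"
    using indep unfolding left_alg_indep_def .
  have "\<forall>e\<in>?A. p e - q e = 0"
    apply (rule mp[OF spec[OF spec[OF ind, of ?A], of "\<lambda>e. p e - q e"]])
    using fA sA z dD by blast
  note zz = this
  show ?thesis
  proof (rule ext)
    fix e show "p e = q e"
    proof (cases "e \<in> ?A")
      case True
      then have "p e - q e = 0" using zz by blast
      then show ?thesis by (simp only: right_minus_eq)
    next
      case False
      then show ?thesis by simp
    qed
  qed
qed

lemma reidx:
  assumes fA: "finite A" and xD: "\<forall>e\<in>A. x e \<in> D" and sA: "A \<subseteq> expvecs m" and d: "d \<in> expvecs m"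
  defines "g \<equiv> (\<lambda>e'. if (\<forall>i. d i \<le> e' i) \<and> (\<lambda>i. e' i - d i) \<in> A then x (\<lambda>i. e' i - d i) else 0)"
  shows "valid g" "(\<Sum>e\<in>A. x e * mon (\<lambda>i. d i + e i)) = evalp g"
proof -
  define h where "h = (\<lambda>e::nat\<Rightarrow>nat. \<lambda>i. d i + e i)"
  have inj: "inj h" unfolding h_def inj_def fun_eq_iff by auto
  have hm: "(\<lambda>i. h e i - d i) = e" for e unfolding h_def by auto
  have hd: "\<forall>i. d i \<le> h e i" for e unfolding h_def by auto
  have gh: "e \<in> A \<Longrightarrow> g (h e) = x e" for e unfolding g_def using hm hd by simp
  have supp: "{e'. g e' \<noteq> 0} \<subseteq> h ` A"
  proof
    fix e' assume "e' \<in> {e'. g e' \<noteq> 0}"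
    then have c: "(\<forall>i. d i \<le> e' i) \<and> (\<lambda>i. e' i - d i) \<in> A" unfolding g_def by (auto split: if_splits)
    then have "e' = h (\<lambda>i. e' i - d i)" unfolding h_def by (auto simp: fun_eq_iff)
    then show "e' \<in> h ` A" using c by blast
  qed
  have hA: "h ` A \<subseteq> expvecs m" using sA d unfolding h_def by (auto intro: expvecs_add)
  show vg: "valid g" unfolding valid_def
  proof (intro conjI)
    show "\<forall>e. g e \<in> D" unfolding g_def using xD D0 by auto
    show "finite {e. g e \<noteq> 0}" using supp fA by (auto intro: finite_subset)
    show "{e. g e \<noteq> 0} \<subseteq> expvecs m" using supp hA by auto
  qed
  have "evalp g = (\<Sum>e'\<in>h ` A. g e' * mon e')" by (rule evalp_sup[OF vg _ supp]) (use fA in auto)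
  also have "\<dots> = (\<Sum>e\<in>A. g (h e) * mon (h e))" by (rule sum.reindex[unfolded comp_def]) (use inj in \<open>auto intro: inj_on_subset\<close>)
  also have "\<dots> = (\<Sum>e\<in>A. x e * mon (h e))" using gh by auto
  finally show "(\<Sum>e\<in>A. x e * mon (\<lambda>i. d i + e i)) = evalp g" unfolding h_def by simp
qed

definition shift where
  "shift c d p = (\<lambda>e'. if (\<forall>i. d i \<le> e' i) \<and> p (\<lambda>i. e' i - d i) \<noteq> 0 then c * tp d (p (\<lambda>i. e' i - d i)) else 0)"

lemma shift_lemma:
  assumes c: "c \<in> D" and d: "d \<in> expvecs m" and p: "valid p"
  shows "valid (shift c d p)" "c * mon d * evalp p = evalp (shift c d p)"
proof -
  let ?A = "{e. p e \<noteq> 0}"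
  have fA: "finite ?A" and sA: "?A \<subseteq> expvecs m" and pD: "\<forall>e. p e \<in> D" using p unfolding valid_def by auto
  have xD: "\<forall>e\<in>?A. c * tp d (p e) \<in> D" using c pD by (auto intro: Dmult tp_D)
  have eq: "shift c d p = (\<lambda>e'. if (\<forall>i. d i \<le> e' i) \<and> (\<lambda>i. e' i - d i) \<in> ?A then c * tp d (p (\<lambda>i. e' i - d i)) else 0)"
    unfolding shift_def by simp
  show "valid (shift c d p)" unfolding eq by (rule reidx(1)[OF fA xD sA d])
  have "c * mon d * evalp p = (\<Sum>e\<in>?A. c * mon d * (p e * mon e))"
    unfolding evalp_def by (simp add: sum_distrib_left)
  also have "\<dots> = (\<Sum>e\<in>?A. c * tp d (p e) * mon (\<lambda>i. d i + e i))"
  proof (rule sum.cong[OF refl])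
    fix e
    have "c * mon d * (p e * mon e) = c * (mon d * p e) * mon e" by (simp add: mult.assoc)
    also have "\<dots> = c * tp d (p e) * (mon d * mon e)" using mon_comm[OF pD[rule_format, of e]] by (simp add: mult.assoc)
    finally show "c * mon d * (p e * mon e) = c * tp d (p e) * mon (\<lambda>i. d i + e i)" by (simp add: mon_mult)
  qed
  also have "\<dots> = evalp (shift c d p)" unfolding eq by (rule reidx(2)[OF fA xD sA d])
  finally show "c * mon d * evalp p = evalp (shift c d p)" .
qed

definition rsh where
  "rsh d p = (\<lambda>e'. if (\<forall>i. d i \<le> e' i) \<and> p (\<lambda>i. e' i - d i) \<noteq> 0 then p (\<lambda>i. e' i - d i) else 0)"

lemma rsh_lemma:
  assumes d: "d \<in> expvecs m" and p: "valid p"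
  shows "valid (rsh d p)" "evalp p * mon d = evalp (rsh d p)"
proof -
  let ?A = "{e. p e \<noteq> 0}"
  have fA: "finite ?A" and sA: "?A \<subseteq> expvecs m" and pD: "\<forall>e. p e \<in> D" using p unfolding valid_def by auto
  have xD: "\<forall>e\<in>?A. p e \<in> D" using pD by auto
  have eq: "rsh d p = (\<lambda>e'. if (\<forall>i. d i \<le> e' i) \<and> (\<lambda>i. e' i - d i) \<in> ?A then p (\<lambda>i. e' i - d i) else 0)"
    unfolding rsh_def by simp
  show "valid (rsh d p)" unfolding eq by (rule reidx(1)[OF fA xD sA d])
  have "evalp p * mon d = (\<Sum>e\<in>?A. p e * mon (\<lambda>i. d i + e i))"
    unfolding evalp_def by (simp add: sum_distrib_right mult.assoc mon_mult add.commute)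
  also have "\<dots> = evalp (rsh d p)" unfolding eq by (rule reidx(2)[OF fA xD sA d])
  finally show "evalp p * mon d = evalp (rsh d p)" .
qed

definition psum where "psum I g = (\<lambda>e. \<Sum>x\<in>I. g x e)"

lemma psum_lemma: "finite I \<Longrightarrow> (\<forall>x\<in>I. valid (g x)) \<Longrightarrow> valid (psum I g) \<and> evalp (psum I g) = (\<Sum>x\<in>I. evalp (g x))"
proof (induct I rule: finite_induct)
  case empty then show ?case by (simp add: psum_def valid_zero evalp_zero)
next
  case (insert x I)
  have eq: "psum (insert x I) g = (\<lambda>e. g x e + psum I g e)" using insert by (simp add: psum_def)
  show ?case unfolding eq using insert valid_add evalp_add by auto
qed

lemma evalp_mult: assumes p: "valid p" and q: "valid q" shows "\<exists>r. valid r \<and> evalp p * evalp q = evalp r"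
proof -
  let ?A = "{e. p e \<noteq> 0}"
  have fA: "finite ?A" and sA: "?A \<subseteq> expvecs m" and pD: "\<forall>e. p e \<in> D" using p unfolding valid_def by auto
  have v: "\<forall>e\<in>?A. valid (shift (p e) e q)" using shift_lemma(1) pD sA q by auto
  have "evalp p * evalp q = (\<Sum>e\<in>?A. p e * mon e * evalp q)" unfolding evalp_def by (simp add: sum_distrib_right)
  also have "\<dots> = (\<Sum>e\<in>?A. evalp (shift (p e) e q))"
    by (rule sum.cong[OF refl], rule shift_lemma(2)) (use pD sA q in auto)
  also have "\<dots> = evalp (psum ?A (\<lambda>e. shift (p e) e q))" using psum_lemma[OF fA v] by simp
  finally show ?thesis using psum_lemma[OF fA v] by blast
qed

lemma gen_rep: "x \<in> gen_subring (D \<union> a ` {..<m}) \<Longrightarrow> \<exists>p. valid p \<and> x = evalp p"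
proof (induct rule: gen_subring.induct)
  case (gen_base x)
  then show ?case
  proof
    assume "x \<in> D" then show ?thesis
      using valid_cpoly[OF _ expvecs_zero, of x] evalp_cpoly[OF _ expvecs_zero, of x] mon_zero by auto
  next
    assume "x \<in> a ` {..<m}"
    then obtain j where j: "j < m" "x = a j" by auto
    show ?thesis using valid_cpoly[OF D1 expvecs_single[OF j(1)], of 1] evalp_cpoly[OF D1 expvecs_single[OF j(1)], of 1]
        mon_single[OF j(1), of 1] j by auto
  qed
next
  case gen_zero then show ?case using valid_zero evalp_zero by auto
next
  case gen_one then show ?case
    using valid_cpoly[OF D1 expvecs_zero] evalp_cpoly[OF D1 expvecs_zero] mon_zero by auto
next
  case (gen_add x y)
  then obtain p q where pq: "valid p" "x = evalp p" "valid q" "y = evalp q" by blast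
  have "valid (\<lambda>e. p e + q e) \<and> x + y = evalp (\<lambda>e. p e + q e)"
    using valid_add[OF pq(1,3)] evalp_add[OF pq(1,3)] pq(2,4) by simp
  then show ?case by blast
next
  case (gen_neg x)
  then obtain p where pq: "valid p" "x = evalp p" by blast
  have "valid (\<lambda>e. - p e) \<and> - x = evalp (\<lambda>e. - p e)"
    using valid_neg[OF pq(1)] evalp_neg[OF pq(1)] pq(2) by simp
  then show ?case by blast
next
  case (gen_mult x y)
  then obtain p q where pq: "valid p" "x = evalp p" "valid q" "y = evalp q" by blast
  obtain r where "valid r" "evalp p * evalp q = evalp r" using evalp_mult[OF pq(1,3)] by blast
  then show ?case using pq(2,4) by blast
qed

end


definition lexf :: "(nat \<Rightarrow> nat) \<Rightarrow> (nat \<Rightarrow> nat) \<Rightarrow> bool" where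
  "lexf e e' \<longleftrightarrow> (\<exists>i. e i < e' i \<and> (\<forall>j<i. e j = e' j))"

definition ordp :: "nat \<times> (nat \<Rightarrow> nat) \<Rightarrow> nat \<times> (nat \<Rightarrow> nat) \<Rightarrow> bool" where
  "ordp x y \<longleftrightarrow> fst x < fst y \<or> (fst x = fst y \<and> lexf (snd x) (snd y))"

lemma lexf_irrefl: "\<not> lexf e e" unfolding lexf_def by auto

lemma lexf_trans: assumes "lexf a b" "lexf b c" shows "lexf a c"
proof -
  obtain i where i: "a i < b i" "\<forall>j<i. a j = b j" using assms(1) unfolding lexf_def by blast
  obtain k where k: "b k < c k" "\<forall>j<k. b j = c j" using assms(2) unfolding lexf_def by blast
  show ?thesis unfolding lexf_def
  proof (cases "i \<le> k")
    case True
    then have "a i < c i" using i k by (cases "i = k") auto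
    moreover have "\<forall>j<i. a j = c j" using i k True by auto
    ultimately show "\<exists>i. a i < c i \<and> (\<forall>j<i. a j = c j)" by blast
  next
    case False
    then have "a k < c k" using i k by auto
    moreover have "\<forall>j<k. a j = c j" using i k False by auto
    ultimately show "\<exists>i. a i < c i \<and> (\<forall>j<i. a j = c j)" by blast
  qed
qed

lemma lexf_total: assumes "e \<noteq> e'" shows "lexf e e' \<or> lexf e' e"
proof -
  have ex: "\<exists>i. e i \<noteq> e' i" using assms by (auto simp: fun_eq_iff)
  define i where "i = (LEAST i. e i \<noteq> e' i)"
  have ne: "e i \<noteq> e' i" unfolding i_def by (rule LeastI_ex[OF ex])
  have eq: "\<forall>j<i. e j = e' j" unfolding i_def using not_less_Least by blast
  show ?thesis
  proof (cases "e i < e' i")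
    case True then show ?thesis using eq unfolding lexf_def by blast
  next
    case False then have "e' i < e i" using ne by auto
    then show ?thesis using eq unfolding lexf_def by auto
  qed
qed

lemma lexf_add: "lexf e e' \<Longrightarrow> lexf (\<lambda>i. d i + e i) (\<lambda>i. d i + e' i)"
  unfolding lexf_def by auto

lemma ordp_irrefl: "\<not> ordp x x" unfolding ordp_def using lexf_irrefl by auto

lemma ordp_trans: "ordp x y \<Longrightarrow> ordp y z \<Longrightarrow> ordp x z"
  unfolding ordp_def using lexf_trans by auto

lemma ordp_total: "x \<noteq> y \<Longrightarrow> ordp x y \<or> ordp y x"
  unfolding ordp_def using lexf_total by (cases x, cases y) auto

lemma ordp_add: "ordp (j, e) (j', e') \<Longrightarrow> ordp (j, \<lambda>i. d i + e i) (j', \<lambda>i. d i + e' i)"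
  unfolding ordp_def using lexf_add by auto

lemma lexf_lexn:
  assumes e: "e \<in> expvecs m" and e': "e' \<in> expvecs m" and l: "lexf e e'"
  shows "(map e [0..<m], map e' [0..<m]) \<in> lexn less_than m"
proof -
  obtain i where i: "e i < e' i" "\<forall>j<i. e j = e' j" using l unfolding lexf_def by blast
  have im: "i < m"
  proof (rule ccontr)
    assume "\<not> i < m" then have "e i = 0" "e' i = 0" using e e' unfolding expvecs_def by auto
    then show False using i by simp
  qed
  have split: "[0..<m] = [0..<i] @ i # [Suc i..<m]"
    using upt_add_eq_append[of 0 i "m - i"] upt_conv_Cons[of i m] im by simp
  have same: "map e [0..<i] = map e' [0..<i]" using i by auto
  have "map e [0..<m] = map e [0..<i] @ e i # map e [Suc i..<m]" by (subst split) simp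
  moreover have "map e' [0..<m] = map e [0..<i] @ e' i # map e' [Suc i..<m]" using same by (subst split) simp
  ultimately show ?thesis unfolding lexn_conv using i(1) im by auto
qed

lemma wf_ordp: "wf {(x, y). snd x \<in> expvecs m \<and> snd y \<in> expvecs m \<and> ordp x y}"
proof (rule wf_subset)
  show "wf (inv_image (less_than <*lex*> lexn less_than m) (\<lambda>x. (fst x, map (snd x) [0..<m])))"
    by (intro wf_inv_image wf_lex_prod wf_lexn wf_less_than)
  show "{(x, y). snd x \<in> expvecs m \<and> snd y \<in> expvecs m \<and> ordp x y} \<subseteq> inv_image (less_than <*lex*> lexn less_than m) (\<lambda>x. (fst x, map (snd x) [0..<m]))"
    using lexf_lexn unfolding ordp_def by auto
qed

lemma ordp_max: "finite A \<Longrightarrow> A \<noteq> {} \<Longrightarrow> \<exists>x\<in>A. \<forall>y\<in>A. y = x \<or> ordp y x"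
proof (induct A rule: finite_ne_induct)
  case (singleton x) then show ?case by auto
next
  case (insert z A)
  then obtain x where x: "x \<in> A" "\<forall>y\<in>A. y = x \<or> ordp y x" by blast
  show ?case
  proof (cases "ordp x z")
    case True
    have "\<forall>y\<in>insert z A. y = z \<or> ordp y z"
    proof
      fix y assume "y \<in> insert z A"
      then consider "y = z" | "y = x" | "ordp y x" using x by blast
      then show "y = z \<or> ordp y z"
      proof cases
        case 3 then show ?thesis using ordp_trans[OF _ True] by blast
      qed (use True in auto)
    qed
    then show ?thesis by blast
  next
    case False
    then have "z = x \<or> ordp z x" using ordp_total by blast
    then show ?thesis using x by blast
  qed
qed

lemma nat_subseq: fixes s :: "nat \<Rightarrow> nat" shows "\<exists>f::nat\<Rightarrow>nat. strict_mono f \<and> (\<forall>p q. p \<le> q \<longrightarrow> s (f p) \<le> s (f q))"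
proof -
  obtain f where f: "strict_mono f" "monoseq (\<lambda>n. s (f n))" using seq_monosub by blast
  show ?thesis
  proof (cases "\<forall>p. \<forall>q\<ge>p. s (f p) \<le> s (f q)")
    case True
    have "strict_mono f \<and> (\<forall>p q. p \<le> q \<longrightarrow> s (f p) \<le> s (f q))" using True f(1) by simp
    then show ?thesis by (rule exI[of _ f])
  next
    case False
    then have dec: "\<forall>p. \<forall>q\<ge>p. s (f q) \<le> s (f p)" using f(2) unfolding monoseq_def by blast
    have ex: "\<exists>v n. s (f n) = v" by blast
    define v where "v = (LEAST v. \<exists>n. s (f n) = v)"
    obtain N where N: "s (f N) = v" using LeastI_ex[OF ex] unfolding v_def by blast
    have low: "v \<le> s (f n)" for n unfolding v_def by (rule Least_le) blast
    have const: "s (f (N + n)) = v" for n using dec low[of "N + n"] N by (metis le_add1 le_antisym)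
    have "strict_mono (\<lambda>n. f (N + n))" using f(1) unfolding strict_mono_def by simp
    then show ?thesis using const by (intro exI[of _ "\<lambda>n. f (N + n)"]) simp
  qed
qed

lemma dickson_seq: fixes x :: "nat \<Rightarrow> nat \<Rightarrow> nat"
  shows "\<exists>g::nat\<Rightarrow>nat. strict_mono g \<and> (\<forall>i<M. \<forall>p q. p \<le> q \<longrightarrow> x (g p) i \<le> x (g q) i)"
proof (induct M)
  case 0 then show ?case by (intro exI[of _ id]) (simp add: strict_mono_def)
next
  case (Suc M)
  then obtain g :: "nat \<Rightarrow> nat" where g: "strict_mono g" "\<forall>i<M. \<forall>p q. p \<le> q \<longrightarrow> x (g p) i \<le> x (g q) i" by blast
  obtain f :: "nat \<Rightarrow> nat" where f: "strict_mono f" "\<forall>p q. p \<le> q \<longrightarrow> x (g (f p)) M \<le> x (g (f q)) M"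
    using nat_subseq[of "\<lambda>n. x (g n) M"] by blast
  have sm: "strict_mono (\<lambda>n. g (f n))" using strict_mono_compose[OF g(1) f(1)] .
  have "\<forall>i<Suc M. \<forall>p q. p \<le> q \<longrightarrow> x (g (f p)) i \<le> x (g (f q)) i"
  proof (intro allI impI)
    fix i p q assume i: "i < Suc M" and pq: "(p::nat) \<le> q"
    show "x (g (f p)) i \<le> x (g (f q)) i"
    proof (cases "i = M")
      case True then show ?thesis using f(2) pq by blast
    next
      case False
      then have "i < M" using i by simp
      moreover have "f p \<le> f q" using pq f(1) by (simp add: strict_mono_less_eq)
      ultimately show ?thesis using g(2) by blast
    qed
  qed
  then show ?case using sm by blast
qed

lemma dickson_pairs:
  fixes z :: "nat \<Rightarrow> nat \<times> (nat \<Rightarrow> nat)"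
  assumes "\<And>n. fst (z n) < k" "\<And>n. snd (z n) \<in> expvecs m"
  shows "\<exists>p q. p < q \<and> fst (z p) = fst (z q) \<and> (\<forall>i. snd (z p) i \<le> snd (z q) i)"
proof -
  obtain g :: "nat \<Rightarrow> nat" where g: "strict_mono g" "\<forall>i<m. \<forall>p q. p \<le> q \<longrightarrow> snd (z (g p)) i \<le> snd (z (g q)) i"
    using dickson_seq[where x = "\<lambda>n. snd (z n)" and M = m] by blast
  let ?h = "\<lambda>n. fst (z (g n))"
  have "?h ` {0..k} \<subseteq> {..<k}" using assms(1) by auto
  then have "card (?h ` {0..k}) \<le> k" using card_mono[of "{..<k}"] by fastforce
  then have "\<not> inj_on ?h {0..k}" using pigeonhole[of ?h "{0..k}"] by simp
  then obtain p q where pq: "p \<in> {0..k}" "q \<in> {0..k}" "p \<noteq> q" "?h p = ?h q" unfolding inj_on_def by blast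
  have "\<exists>p q. p < q \<and> ?h p = ?h q"
  proof (cases "p < q")
    case True then show ?thesis using pq(4) by blast
  next
    case False then have "q < p" using pq(3) by simp
    then show ?thesis using pq(4) by metis
  qed
  then obtain p q where pq: "p < q" "?h p = ?h q" by blast
  have "g p < g q" using g(1) pq(1) by (simp add: strict_mono_less)
  moreover have "\<forall>i. snd (z (g p)) i \<le> snd (z (g q)) i"
  proof
    fix i show "snd (z (g p)) i \<le> snd (z (g q)) i"
    proof (cases "i < m")
      case True then show ?thesis using g(2) pq(1) by auto
    next
      case False then show ?thesis using assms(2)[of "g p"] assms(2)[of "g q"] unfolding expvecs_def by auto
    qed
  qed
  ultimately show ?thesis using pq(2) by blast
qed



locale AN2 = AN D m a \<tau> for D :: "'a::division_ring set" and m a \<tau> +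
  fixes k :: nat and fs :: "nat \<Rightarrow> 'a"
  assumes m_pos: "0 < m"
  and gen: "\<And>s. \<exists>P. (\<forall>j. valid (P j)) \<and> s = (\<Sum>j<k. evalp (P j) * fs j)"
begin

definition "t = a 0"
definition "u = inverse t"
definition "z0 = (\<lambda>i::nat. 0::nat)"
definition "sg s = (\<lambda>i::nat. if i = 0 then s else (0::nat))"

lemma sg_exp: "sg s \<in> expvecs m" unfolding sg_def using expvecs_single[OF m_pos] by simp
lemma mon_sg: "mon (sg s) = t ^ s" unfolding sg_def t_def using mon_single[OF m_pos] by simp

lemma t_nz: "t \<noteq> 0"
proof
  assume t0: "t = 0"
  have "evalp (cpoly 1 (sg 1)) = 1 * mon (sg 1)" by (rule evalp_cpoly[OF D1 sg_exp])
  also have "\<dots> = 0" using mon_sg[of 1] t0 by simp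
  also have "\<dots> = evalp (\<lambda>e. 0)" using evalp_zero by simp
  finally have eq: "evalp (cpoly 1 (sg 1)) = evalp (\<lambda>e. 0)" .
  have "cpoly 1 (sg 1) = (\<lambda>e. 0)" by (rule evalp_unique[OF valid_cpoly[OF D1 sg_exp] valid_zero eq])
  then have "cpoly 1 (sg 1) (sg 1) = 0" by simp
  then show False unfolding cpoly_def by simp
qed

lemma ut: "u * t = 1" and tu: "t * u = 1" unfolding u_def using t_nz by auto

lemma upow_tpow: "u ^ i * t ^ i = 1"
proof (induct i)
  case 0 then show ?case by simp
next
  case (Suc i)
  have a1: "u ^ Suc i = u * u ^ i" by (rule power_Suc)
  have a2: "t ^ Suc i = t ^ i * t" by (rule power_Suc2)
  have "u ^ Suc i * t ^ Suc i = u * (u ^ i * t ^ i) * t" unfolding a1 a2 by (simp only: mult.assoc)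
  then show ?case using Suc ut by simp
qed

lemma upow_tpow2: "i \<le> n \<Longrightarrow> u ^ i * t ^ n = t ^ (n - i)"
proof -
  assume "i \<le> n"
  then have "t ^ n = t ^ i * t ^ (n - i)" by (simp flip: power_add)
  then have "u ^ i * t ^ n = (u ^ i * t ^ i) * t ^ (n - i)" by (simp add: mult.assoc)
  then show ?thesis using upow_tpow by simp
qed

definition Mset :: "nat \<Rightarrow> 'a set" where
  "Mset n = {x. \<exists>p. (\<forall>i. valid (p i)) \<and> x = (\<Sum>i<n. evalp (p i) * u ^ i)}"

lemma M_add: assumes "x \<in> Mset n" "y \<in> Mset n" shows "x + y \<in> Mset n"
proof -
  obtain p where p: "\<forall>i. valid (p i)" "x = (\<Sum>i<n. evalp (p i) * u ^ i)" using assms(1) unfolding Mset_def by blast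
  obtain q where q: "\<forall>i. valid (q i)" "y = (\<Sum>i<n. evalp (q i) * u ^ i)" using assms(2) unfolding Mset_def by blast
  have v: "\<forall>i. valid (\<lambda>e. p i e + q i e)" using p q valid_add by blast
  have "x + y = (\<Sum>i<n. evalp (\<lambda>e. p i e + q i e) * u ^ i)"
    unfolding p q by (simp add: evalp_add p(1) q(1) distrib_right sum.distrib)
  then show ?thesis unfolding Mset_def using v by (intro CollectI exI[of _ "\<lambda>i e. p i e + q i e"]) simp
qed

lemma M_diff: assumes "x \<in> Mset n" "y \<in> Mset n" shows "x - y \<in> Mset n"
proof -
  obtain p where p: "\<forall>i. valid (p i)" "x = (\<Sum>i<n. evalp (p i) * u ^ i)" using assms(1) unfolding Mset_def by blast
  obtain q where q: "\<forall>i. valid (q i)" "y = (\<Sum>i<n. evalp (q i) * u ^ i)" using assms(2) unfolding Mset_def by blast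
  have v: "\<forall>i. valid (\<lambda>e. p i e - q i e)" using p q valid_diff by blast
  have "x - y = (\<Sum>i<n. evalp (\<lambda>e. p i e - q i e) * u ^ i)"
    unfolding p q by (simp add: evalp_diff p(1) q(1) left_diff_distrib sum_subtractf)
  then show ?thesis unfolding Mset_def using v by (intro CollectI exI[of _ "\<lambda>i e. p i e - q i e"]) simp
qed

lemma M_smul: assumes c: "c \<in> D" and d: "d \<in> expvecs m" and x: "x \<in> Mset n" shows "c * mon d * x \<in> Mset n"
proof -
  obtain p where p: "\<forall>i. valid (p i)" "x = (\<Sum>i<n. evalp (p i) * u ^ i)" using x unfolding Mset_def by blast
  have v: "\<forall>i. valid (shift c d (p i))" using p shift_lemma(1)[OF c d] by blast
  have "c * mon d * x = (\<Sum>i<n. (c * mon d * evalp (p i)) * u ^ i)"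
    unfolding p by (simp add: sum_distrib_left mult.assoc)
  also have "\<dots> = (\<Sum>i<n. evalp (shift c d (p i)) * u ^ i)"
    using shift_lemma(2)[OF c d] p(1) by simp
  finally show ?thesis unfolding Mset_def using v by (intro CollectI exI[of _ "\<lambda>i. shift c d (p i)"]) simp
qed

lemma M_mono: assumes "x \<in> Mset n" shows "x \<in> Mset (Suc n)"
proof -
  obtain p where p: "\<forall>i. valid (p i)" "x = (\<Sum>i<n. evalp (p i) * u ^ i)" using assms unfolding Mset_def by blast
  define p' where "p' = (\<lambda>i. if i < n then p i else (\<lambda>e. 0))"
  have v: "\<forall>i. valid (p' i)" unfolding p'_def using p valid_zero by auto
  have "(\<Sum>i<Suc n. evalp (p' i) * u ^ i) = (\<Sum>i<n. evalp (p' i) * u ^ i)"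
    unfolding p'_def by (simp add: evalp_zero)
  also have "\<dots> = x" unfolding p p'_def by simp
  finally show ?thesis unfolding Mset_def using v by (intro CollectI exI[of _ p']) simp
qed

lemma M_mono': "a' \<le> b' \<Longrightarrow> x \<in> Mset a' \<Longrightarrow> x \<in> Mset b'"
  by (induct b' rule: dec_induct) (auto intro: M_mono)

lemma M_zero: "0 \<in> Mset n"
  unfolding Mset_def using valid_zero evalp_zero by (intro CollectI exI[of _ "\<lambda>i e. 0"]) simp

lemma u_in: "u ^ n \<in> Mset (Suc n)"
proof -
  define p where "p = (\<lambda>i. if i = n then cpoly 1 z0 else (\<lambda>e. 0))"
  have z0e: "z0 \<in> expvecs m" unfolding z0_def by (rule expvecs_zero)
  have v: "\<forall>i. valid (p i)" unfolding p_def using valid_zero valid_cpoly[OF D1 z0e] by auto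
  have "(\<Sum>i<Suc n. evalp (p i) * u ^ i) = evalp (p n) * u ^ n"
    unfolding p_def by (simp add: evalp_zero)
  also have "\<dots> = u ^ n" unfolding p_def using evalp_cpoly[OF D1 z0e] mon_zero unfolding z0_def by simp
  finally show ?thesis unfolding Mset_def using v by (intro CollectI exI[of _ p]) simp
qed

end

context AN2 begin

definition validv :: "(nat \<Rightarrow> (nat \<Rightarrow> nat) \<Rightarrow> 'a) \<Rightarrow> bool" where
  "validv V \<longleftrightarrow> (\<forall>j. valid (V j)) \<and> (\<forall>j e. k \<le> j \<longrightarrow> V j e = 0)"

definition evv :: "(nat \<Rightarrow> (nat \<Rightarrow> nat) \<Rightarrow> 'a) \<Rightarrow> 'a" where
  "evv V = (\<Sum>j<k. evalp (V j) * fs j)"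

definition supp :: "(nat \<Rightarrow> (nat \<Rightarrow> nat) \<Rightarrow> 'a) \<Rightarrow> (nat \<times> (nat \<Rightarrow> nat)) set" where
  "supp V = {x. V (fst x) (snd x) \<noteq> 0}"

definition K :: "nat \<Rightarrow> (nat \<Rightarrow> (nat \<Rightarrow> nat) \<Rightarrow> 'a) set" where
  "K n = {V. validv V \<and> evv V \<in> Mset n}"

definition LT :: "(nat \<Rightarrow> (nat \<Rightarrow> nat) \<Rightarrow> 'a) \<Rightarrow> nat \<times> (nat \<Rightarrow> nat)" where
  "LT V = (SOME x. x \<in> supp V \<and> (\<forall>y\<in>supp V. y = x \<or> ordp y x))"

lemma supp_sub: assumes "validv V" shows "supp V \<subseteq> {x. fst x < k \<and> snd x \<in> expvecs m}"
proof
  fix x assume x: "x \<in> supp V"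
  then have nz: "V (fst x) (snd x) \<noteq> 0" unfolding supp_def by simp
  then have "fst x < k" using assms unfolding validv_def by (meson not_less)
  moreover have "snd x \<in> expvecs m" using nz assms unfolding validv_def valid_def by blast
  ultimately show "x \<in> {x. fst x < k \<and> snd x \<in> expvecs m}" by simp
qed

lemma supp_fin: assumes "validv V" shows "finite (supp V)"
proof -
  have "supp V \<subseteq> (\<Union>j<k. Pair j ` {e. V j e \<noteq> 0})"
  proof
    fix x assume x: "x \<in> supp V"
    then have "fst x < k" using supp_sub[OF assms] by auto
    then show "x \<in> (\<Union>j<k. Pair j ` {e. V j e \<noteq> 0})" using x unfolding supp_def
      by (intro UN_I[of "fst x"]) (auto intro: image_eqI[of _ _ "snd x"])
  qed
  moreover have "finite (\<Union>j<k. Pair j ` {e. V j e \<noteq> 0})"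
    using assms unfolding validv_def valid_def by auto
  ultimately show ?thesis by (rule finite_subset)
qed

lemma LT_prop: assumes "validv V" "supp V \<noteq> {}"
  shows "LT V \<in> supp V" "\<forall>y\<in>supp V. y = LT V \<or> ordp y (LT V)"
proof -
  have ex: "\<exists>x. x \<in> supp V \<and> (\<forall>y\<in>supp V. y = x \<or> ordp y x)"
    using ordp_max[OF supp_fin[OF assms(1)] assms(2)] by blast
  show "LT V \<in> supp V" "\<forall>y\<in>supp V. y = LT V \<or> ordp y (LT V)"
    using someI_ex[OF ex] unfolding LT_def by blast+
qed

lemma LT_range: assumes "validv V" "supp V \<noteq> {}" shows "fst (LT V) < k" "snd (LT V) \<in> expvecs m"
  using LT_prop(1)[OF assms] supp_sub[OF assms(1)] by auto

lemma evv_zero: assumes "validv V" "supp V = {}" shows "evv V = 0"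
proof -
  have "V j = (\<lambda>e. 0)" for j using assms(2) unfolding supp_def by (auto simp: fun_eq_iff)
  then show ?thesis unfolding evv_def by (simp add: evalp_zero)
qed

lemma K_nonzero: assumes "V \<in> K (Suc n)" "V \<notin> K n" shows "supp V \<noteq> {}"
proof
  assume "supp V = {}"
  then have "evv V = 0" using assms(1) evv_zero unfolding K_def by blast
  then show False using assms M_zero unfolding K_def by auto
qed

definition vdiff where "vdiff V W = (\<lambda>j e. V j e - W j e)"
definition vsmul where "vsmul c d Q = (\<lambda>j. shift c d (Q j))"

lemma validv_diff: "validv V \<Longrightarrow> validv W \<Longrightarrow> validv (vdiff V W)"
  unfolding validv_def vdiff_def using valid_diff by auto

lemma evv_diff: "validv V \<Longrightarrow> validv W \<Longrightarrow> evv (vdiff V W) = evv V - evv W"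
  unfolding validv_def vdiff_def evv_def by (simp add: evalp_diff left_diff_distrib sum_subtractf)

lemma validv_smul: assumes c: "c \<in> D" and d: "d \<in> expvecs m" and Q: "validv Q" shows "validv (vsmul c d Q)"
  using Q shift_lemma(1)[OF c d] unfolding validv_def vsmul_def shift_def by auto

lemma evv_smul: assumes c: "c \<in> D" and d: "d \<in> expvecs m" and Q: "validv Q" shows "evv (vsmul c d Q) = c * mon d * evv Q"
proof -
  have "c * mon d * evv Q = (\<Sum>j<k. (c * mon d * evalp (Q j)) * fs j)"
    unfolding evv_def by (simp add: sum_distrib_left mult.assoc)
  also have "\<dots> = evv (vsmul c d Q)" unfolding evv_def vsmul_def
    using shift_lemma(2)[OF c d] Q unfolding validv_def by simp
  finally show ?thesis by simp
qed

lemma K_mono: "a' \<le> b' \<Longrightarrow> K a' \<subseteq> K b'"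
  unfolding K_def using M_mono' by blast

lemma reduce:
  assumes V1: "V \<in> K (Suc n)" and V2: "V \<notin> K n" and Q1: "Q \<in> K n" and Q2: "supp Q \<noteq> {}"
    and LQ: "LT Q = (j, e0)" and LV: "LT V = (j, e)" and le: "\<forall>i. e0 i \<le> e i"
  shows "\<exists>W. W \<in> K (Suc n) \<and> W \<notin> K n \<and> ordp (LT W) (LT V)"
proof -
  have vV: "validv V" and MV: "evv V \<in> Mset (Suc n)" using V1 unfolding K_def by auto
  have vQ: "validv Q" and MQ: "evv Q \<in> Mset n" using Q1 unfolding K_def by auto
  have sV: "supp V \<noteq> {}" by (rule K_nonzero[OF V1 V2])
  have eexp: "e \<in> expvecs m" using LT_range(2)[OF vV sV] LV by simp
  define d where "d = (\<lambda>i. e i - e0 i)"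
  have dexp: "d \<in> expvecs m" unfolding d_def by (rule expvecs_diff[OF eexp])
  have de0: "(\<lambda>i. d i + e0 i) = e" unfolding d_def using le by (auto simp: fun_eq_iff)
  have ed: "(\<lambda>i. e i - d i) = e0" unfolding d_def using le by (auto simp: fun_eq_iff)
  have dle: "\<forall>i. d i \<le> e i" unfolding d_def by auto
  have Qnz: "Q j e0 \<noteq> 0" using LT_prop(1)[OF vQ Q2] LQ unfolding supp_def by auto
  have QD: "Q j e0 \<in> D" using vQ unfolding validv_def valid_def by blast
  have tnz: "tp d (Q j e0) \<noteq> 0" by (rule tp_nz[OF QD Qnz])
  have VD: "V j e \<in> D" using vV unfolding validv_def valid_def by blast
  define c where "c = V j e * inverse (tp d (Q j e0))"
  have cD: "c \<in> D" unfolding c_def by (intro Dmult VD Dinv tp_D QD)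
  define X where "X = vsmul c d Q"
  define W where "W = vdiff V X"
  have vX: "validv X" unfolding X_def by (rule validv_smul[OF cD dexp vQ])
  have eX: "evv X = c * mon d * evv Q" unfolding X_def by (rule evv_smul[OF cD dexp vQ])
  have MX: "evv X \<in> Mset n" unfolding eX by (rule M_smul[OF cD dexp MQ])
  have vW: "validv W" unfolding W_def by (rule validv_diff[OF vV vX])
  have eW: "evv W = evv V - evv X" unfolding W_def by (rule evv_diff[OF vV vX])
  have W1: "W \<in> K (Suc n)" unfolding K_def using vW eW MV M_mono[OF MX] M_diff by auto
  have W2: "W \<notin> K n"
  proof
    assume "W \<in> K n"
    then have "evv W \<in> Mset n" unfolding K_def by simp
    then have "evv W + evv X \<in> Mset n" using MX M_add by blast
    then have "V \<in> K n" using eW vV unfolding K_def by simp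
    then show False using V2 by simp
  qed
  have sW: "supp W \<noteq> {}" by (rule K_nonzero[OF W1 W2])
  have Xje: "X j e = V j e"
  proof -
    have "X j e = c * tp d (Q j e0)" unfolding X_def vsmul_def shift_def using dle ed Qnz by simp
    also have "\<dots> = V j e" unfolding c_def using tnz by (simp add: mult.assoc)
    finally show ?thesis .
  qed
  have all: "\<forall>y\<in>supp W. ordp y (j, e)"
  proof
    fix y assume y: "y \<in> supp W"
    obtain j' e' where yy: "y = (j', e')" by (cases y)
    have Wnz: "W j' e' \<noteq> 0" using y yy unfolding supp_def by simp
    have ne: "y \<noteq> (j, e)"
    proof
      assume "y = (j, e)"
      then have "W j e \<noteq> 0" using Wnz yy by simp
      then show False unfolding W_def vdiff_def using Xje by simp
    qed
    have "V j' e' \<noteq> 0 \<or> X j' e' \<noteq> 0" using Wnz unfolding W_def vdiff_def by auto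
    then show "ordp y (j, e)"
    proof
      assume "V j' e' \<noteq> 0"
      then have "y \<in> supp V" using yy unfolding supp_def by simp
      then show ?thesis using LT_prop(2)[OF vV sV] LV ne by auto
    next
      assume Xnz: "X j' e' \<noteq> 0"
      then have c1: "\<forall>i. d i \<le> e' i" and c2: "Q j' (\<lambda>i. e' i - d i) \<noteq> 0"
        unfolding X_def vsmul_def shift_def by (auto split: if_splits)
      have "(j', \<lambda>i. e' i - d i) \<in> supp Q" using c2 unfolding supp_def by simp
      then have disj: "(j', \<lambda>i. e' i - d i) = (j, e0) \<or> ordp (j', \<lambda>i. e' i - d i) (j, e0)"
        using LT_prop(2)[OF vQ Q2] LQ by auto
      have bk: "(\<lambda>i. d i + (e' i - d i)) = e'" using c1 by (auto simp: fun_eq_iff)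
      from disj show ?thesis
      proof
        assume "(j', \<lambda>i. e' i - d i) = (j, e0)"
        then have "j' = j" "(\<lambda>i. d i + (e' i - d i)) = (\<lambda>i. d i + e0 i)" by auto
        then have "y = (j, e)" using yy bk de0 by simp
        then show ?thesis using ne by simp
      next
        assume "ordp (j', \<lambda>i. e' i - d i) (j, e0)"
        then have "ordp (j', \<lambda>i. d i + (e' i - d i)) (j, \<lambda>i. d i + e0 i)" by (rule ordp_add)
        then show ?thesis using yy bk de0 by simp
      qed
    qed
  qed
  have "ordp (LT W) (LT V)" using all LT_prop(1)[OF vW sW] LV by simp
  then show ?thesis using W1 W2 by blast
qed

end

context AN2 begin

lemma strict_exists: assumes "u ^ n \<notin> Mset n" shows "\<exists>V. V \<in> K (Suc n) \<and> V \<notin> K n"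
proof -
  obtain P where P: "\<forall>j. valid (P j)" "u ^ n = (\<Sum>j<k. evalp (P j) * fs j)" using gen by blast
  define V where "V = (\<lambda>j. if j < k then P j else (\<lambda>e. 0))"
  have vV: "validv V" unfolding validv_def V_def using P(1) valid_zero by auto
  have eV: "evv V = u ^ n" unfolding evv_def V_def P(2) by simp
  have "V \<in> K (Suc n)" unfolding K_def using vV eV u_in by simp
  moreover have "V \<notin> K n" unfolding K_def using eV assms by simp
  ultimately show ?thesis by blast
qed

abbreviation "RR \<equiv> {(x, y). snd x \<in> expvecs m \<and> snd y \<in> expvecs m \<and> ordp x y}"

lemma minimal_exists: assumes "u ^ n \<notin> Mset n"
  shows "\<exists>w. w \<in> K (Suc n) \<and> w \<notin> K n \<and> (\<forall>W. W \<in> K (Suc n) \<and> W \<notin> K n \<longrightarrow> \<not> ordp (LT W) (LT w))"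
proof -
  let ?S = "{V. V \<in> K (Suc n) \<and> V \<notin> K n}"
  obtain V0 where V0: "V0 \<in> ?S" using strict_exists[OF assms] by blast
  have "LT V0 \<in> LT ` ?S" using V0 by blast
  obtain zz where zz: "zz \<in> LT ` ?S" and mn: "\<And>y. (y, zz) \<in> RR \<Longrightarrow> y \<notin> LT ` ?S"
    by (rule wfE_min[OF wf_ordp[of m] \<open>LT V0 \<in> LT ` ?S\<close>]) iprover
  obtain w where w: "w \<in> ?S" "LT w = zz" using zz by blast
  have vw: "validv w" "supp w \<noteq> {}" using w(1) K_nonzero unfolding K_def by auto
  have "\<forall>W. W \<in> K (Suc n) \<and> W \<notin> K n \<longrightarrow> \<not> ordp (LT W) (LT w)"
  proof (intro allI impI notI)
    fix W assume W: "W \<in> K (Suc n) \<and> W \<notin> K n" and o: "ordp (LT W) (LT w)"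
    have vW: "validv W" "supp W \<noteq> {}" using W K_nonzero unfolding K_def by auto
    have "(LT W, zz) \<in> RR" using o w(2) LT_range(2)[OF vW] LT_range(2)[OF vw] by simp
    then have "LT W \<notin> LT ` ?S" by (rule mn)
    then show False using W by blast
  qed
  then show ?thesis using w(1) by blast
qed

lemma integral: "\<exists>n. u ^ n \<in> Mset n"
proof (rule ccontr)
  assume "\<not> (\<exists>n. u ^ n \<in> Mset n)"
  then have nm: "\<And>n. u ^ n \<notin> Mset n" by blast
  have "\<forall>n. \<exists>w. w \<in> K (Suc n) \<and> w \<notin> K n \<and> (\<forall>W. W \<in> K (Suc n) \<and> W \<notin> K n \<longrightarrow> \<not> ordp (LT W) (LT w))"
    using minimal_exists[OF nm] by blast
  then obtain w where w: "\<And>n. w n \<in> K (Suc n)" "\<And>n. w n \<notin> K n"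
      "\<And>n W. W \<in> K (Suc n) \<Longrightarrow> W \<notin> K n \<Longrightarrow> \<not> ordp (LT W) (LT (w n))"
    by metis
  have vw: "\<And>n. validv (w n)" "\<And>n. supp (w n) \<noteq> {}" using w(1,2) K_nonzero unfolding K_def by auto
  obtain p q where pq: "p < q" "fst (LT (w p)) = fst (LT (w q))" "\<forall>i. snd (LT (w p)) i \<le> snd (LT (w q)) i"
    using dickson_pairs[of "\<lambda>n. LT (w n)" k m] LT_range[OF vw(1) vw(2)] by blast
  have Q1: "w p \<in> K q" using K_mono[of "Suc p" q] pq(1) w(1)[of p] by auto
  obtain j e0 where LQ: "LT (w p) = (j, e0)" by (cases "LT (w p)")
  obtain j' e where LV: "LT (w q) = (j', e)" by (cases "LT (w q)")
  have jj: "j' = j" using pq(2) LQ LV by simp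
  have le: "\<forall>i. e0 i \<le> e i" using pq(3) LQ LV by simp
  obtain W where W: "W \<in> K (Suc q)" "W \<notin> K q" "ordp (LT W) (LT (w q))"
    using reduce[OF w(1)[of q] w(2)[of q] Q1 vw(2)[of p] LQ LV[unfolded jj] le] by blast
  show False using w(3)[OF W(1,2)] W(3) by blast
qed

lemma contradiction: False
proof -
  obtain n where n: "u ^ n \<in> Mset n" using integral by blast
  then obtain p where p: "\<forall>i. valid (p i)" "u ^ n = (\<Sum>i<n. evalp (p i) * u ^ i)" unfolding Mset_def by blast
  define r where "r = (\<lambda>i. rsh (sg (n - i)) (p i))"
  have vr: "\<forall>i. valid (r i)" unfolding r_def using rsh_lemma(1)[OF sg_exp] p(1) by blast
  have "1 = u ^ n * t ^ n" using upow_tpow by simp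
  also have "\<dots> = (\<Sum>i<n. evalp (p i) * (u ^ i * t ^ n))" unfolding p(2) by (simp add: sum_distrib_right mult.assoc)
  also have "\<dots> = (\<Sum>i<n. evalp (p i) * mon (sg (n - i)))" using upow_tpow2 mon_sg by simp
  also have "\<dots> = (\<Sum>i<n. evalp (r i))" unfolding r_def using rsh_lemma(2)[OF sg_exp] p(1) by simp
  also have "\<dots> = evalp (psum {..<n} r)" using psum_lemma[of "{..<n}" r] vr by simp
  finally have eq: "evalp (cpoly 1 z0) = evalp (psum {..<n} r)"
    using evalp_cpoly[OF D1 expvecs_zero] mon_zero unfolding z0_def by simp
  have z0e: "z0 \<in> expvecs m" unfolding z0_def by (rule expvecs_zero)
  have vs: "valid (psum {..<n} r)" using psum_lemma[of "{..<n}" r] vr by simp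
  have "cpoly 1 z0 = psum {..<n} r" by (rule evalp_unique[OF valid_cpoly[OF D1 z0e] vs eq])
  then have "cpoly 1 z0 z0 = psum {..<n} r z0" by simp
  moreover have "cpoly 1 z0 z0 = 1" unfolding cpoly_def by simp
  moreover have "r i z0 = 0" if "i < n" for i
    using that unfolding r_def rsh_def sg_def z0_def by (auto dest: spec[of _ 0])
  ultimately have "(1::'a) = 0" unfolding psum_def by simp
  then show False by simp
qed

end


lemma (in AN) final:
  assumes pos: "0 < m" and fg: "fin_gen_left_module (gen_subring (D \<union> a ` {..<m}))"
  shows False
proof -
  let ?R = "gen_subring (D \<union> a ` {..<m})"
  obtain F where F: "finite F" "\<forall>s. \<exists>r. (\<forall>f\<in>F. r f \<in> ?R) \<and> s = (\<Sum>f\<in>F. r f * f)"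
    using fg unfolding fin_gen_left_module_def by blast
  obtain xs where xs: "distinct xs" "set xs = F" using finite_distinct_list[OF F(1)] by blast
  define k where "k = length xs"
  define fs where "fs = (\<lambda>j. xs ! j)"
  have img: "fs ` {..<k} = F" unfolding fs_def k_def xs(2)[symmetric] by (auto simp: set_conv_nth)
  have inj: "inj_on fs {..<k}" unfolding fs_def k_def by (rule inj_on_nth[OF xs(1)]) simp
  have gen: "\<exists>P. (\<forall>j. valid (P j)) \<and> s = (\<Sum>j<k. evalp (P j) * fs j)" for s
  proof -
    obtain r where r: "\<forall>f\<in>F. r f \<in> ?R" "s = (\<Sum>f\<in>F. r f * f)" using F(2) by blast
    have "\<forall>j. \<exists>p. valid p \<and> (j < k \<longrightarrow> r (fs j) = evalp p)"
    proof
      fix j show "\<exists>p. valid p \<and> (j < k \<longrightarrow> r (fs j) = evalp p)"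
      proof (cases "j < k")
        case True
        then have "fs j \<in> F" using img by blast
        then obtain p where "valid p" "r (fs j) = evalp p" using gen_rep r(1) by blast
        then show ?thesis by blast
      next
        case False then show ?thesis using valid_zero by blast
      qed
    qed
    then obtain P where P: "\<And>j. valid (P j)" "\<And>j. j < k \<Longrightarrow> r (fs j) = evalp (P j)" by metis
    have "s = (\<Sum>j<k. r (fs j) * fs j)" unfolding r(2) img[symmetric] by (rule sum.reindex[OF inj, unfolded comp_def])
    also have "\<dots> = (\<Sum>j<k. evalp (P j) * fs j)" using P(2) by simp
    finally show ?thesis using P(1) by blast
  qed
  interpret AN2 D m a \<tau> k fs
    by unfold_locales (use pos gen in auto)
  show False by (rule contradiction)
qed

theorem proposition2p19:
  fixes D :: "'a::division_ring set"
  assumes "subdivring D"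
    and "automorphically_normalizable D"
  shows "fin_gen_left_module D"
proof -
  obtain m a \<tau> where comm: "\<forall>i<m. \<forall>j<m. a i * a j = a j * a i"
    and aut: "\<forall>i<m. ring_aut_on D (\<tau> i) \<and> automorphic D (\<tau> i) (a i)"
    and indep: "left_alg_indep D a m"
    and fg: "fin_gen_left_module (gen_subring (D \<union> a ` {..<m}))"
    using assms(2) unfolding automorphically_normalizable_def by (elim exE conjE) (rule that; assumption)
  show ?thesis
  proof (cases "m = 0")
    case True
    have sub: "x \<in> D" if "x \<in> gen_subring (D \<union> a ` {..<m})" for x
      using that
    proof (induct rule: gen_subring.induct)
      case (gen_base x) then show ?case using True by simp
    qed (use assms(1) in \<open>auto simp: subdivring_def\<close>)
    obtain F where F: "finite F" "\<forall>s. \<exists>r. (\<forall>f\<in>F. r f \<in> gen_subring (D \<union> a ` {..<m})) \<and> s = (\<Sum>f\<in>F. r f * f)"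
      using fg unfolding fin_gen_left_module_def by blast
    have "\<forall>s. \<exists>r. (\<forall>f\<in>F. r f \<in> D) \<and> s = (\<Sum>f\<in>F. r f * f)"
    proof
      fix s
      obtain r where r: "\<forall>f\<in>F. r f \<in> gen_subring (D \<union> a ` {..<m})" "s = (\<Sum>f\<in>F. r f * f)"
        using F(2) by blast
      have "\<forall>f\<in>F. r f \<in> D" using r(1) sub by blast
      then show "\<exists>r. (\<forall>f\<in>F. r f \<in> D) \<and> s = (\<Sum>f\<in>F. r f * f)" using r(2) by blast
    qed
    then show ?thesis unfolding fin_gen_left_module_def using F(1) by blast
  next
    case False
    interpret AN D m a \<tau>
      using assms(1) comm aut indep by unfold_locales auto
    show ?thesis using final[OF _ fg] False by simp
  qed
qed


end
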